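(* Let $\Gamma$ be a graph with $N$ edges. Then $\mathcal{T}(\Gamma)$ equals the set of $(\mathbf{z},\mathbf{x})\in\mathbb{T}^N\times\mathbb{C}^{4N}$, $\mathbf{x}=(A_j,B_j,C_j,D_j)_{j=1}^N$, satisfying: (1) the vertex conditions $P_{\mathrm{std}}\mathbf{x}=0$; and (2) for every edge $e_j$, $A_j+iB_j-z_j(C_j-iD_j)=0$ and $C_j+iD_j-z_j(A_j-iB_j)=0$. In particular $\mathcal{T}(\Gamma)$ is an algebraic subvariety of $\mathbb{T}^N\times\mathbb{C}^{4N}$. Moreover, for each $\mathbf{z}\in\Sigma(\Gamma)$ the fiber $\mathcal{T}_{\mathbf{z}}(\Gamma)=\{\mathbf{x}\in\mathbb{C}^{4N}:(\mathbf{z},\mathbf{x})\in\mathcal{T}(\Gamma)\}$ is a complex linear subspace of $\mathbb{C}^{4N}$ having a basis of real vectors.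
   Context: $\Gamma$ is a finite graph with edges $e_1,\dots,e_N$, each oriented from $o(e_j)$ to $\tau(e_j)$. For $\boldsymbol{\ell}\in\mathbb{R}_+^N$, $(\Gamma,\boldsymbol{\ell})$ has $e_j\cong[0,\ell_j]$ and the Laplacian $-d^2/dt^2$ edgewise with standard vertex conditions (continuity at each vertex, and $\sum_{o(e_j)=v}f'|_{e_j}(0)-\sum_{\tau(e_j)=v}f'|_{e_j}(\ell_j)=0$). $\mathrm{spec}(\Gamma,\boldsymbol{\ell})$ is the set of $k\ge0$ with $k^2$ an eigenvalue and $\mathrm{Eig}(\Gamma,\boldsymbol{\ell},k)$ the eigenspace (including $0$). For an eigenfunction with $k>0$: $f|_{e_j}(t)=A_j\cos(kt)+B_j\sin(kt)=C_j\cos(k(\ell_j-t))+D_j\sin(k(\ell_j-t))$ and $\mathrm{tr}_k(f)\in\mathbb{C}^{4N}$ collects all $A_j,B_j,C_j,D_j$ ($A_j,C_j$ are the endpoint values, $B_j=f'|_{e_j}(0)/k$, $D_j=-f'|_{e_j}(\ell_j)/k$); for $k=0$, $f\equiv c$ has $A_j=C_j=c$, $B_j=D_j=0$. $\mathbb{T}^N=\{\mathbf{z}\in\mathbb{C}^N:|z_j|=1\}$, $\exp(ik\boldsymbol{\ell})=(e^{ik\ell_j})_j$. Trace space $\mathcal{T}(\Gamma)=\{(\exp(ik\boldsymbol{\ell}),\mathrm{tr}_k(f)):\boldsymbol{\ell}\in\mathbb{R}_+^N,k\in\mathrm{spec}(\Gamma,\boldsymbol{\ell}),f\in\mathrm{Eig}(\Gamma,\boldsymbol{\ell},k)\}$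 and $\Sigma(\Gamma)$ its projection to $\mathbb{T}^N$. $P_{\mathrm{std}}$ is the $2N\times4N$ real matrix of rank $2N$ expressing the standard vertex conditions on trace vectors: at each vertex $v$, all $A_j$ with $o(e_j)=v$ and $C_j$ with $\tau(e_j)=v$ are equal, and $\sum_{o(e_j)=v}B_j+\sum_{\tau(e_j)=v}D_j=0$. *)

theory Defs
  imports "HOL-Analysis.Analysis"
begin

text \<open>A finite graph: edges form a finite type 'e (so N = CARD('e)); each edge e
  is oriented from org e to trm e (vertices of an arbitrary type 'v). Loops and
  multiple edges are allowed.\<close>

text \<open>Coordinates of a trace vector: for each edge j the four numbers A_j, B_j, C_j, D_j.
  A trace vector in C^(4N) is thus an element of complex ^ ('e \<times> coord).\<close>
datatype coord = cA | cB | cC | cD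

lemma UNIV_coord: "(UNIV :: coord set) = {cA, cB, cC, cD}"
  using coord.exhaust by auto

instance coord :: finite
  by standard (simp add: UNIV_coord)

abbreviation edge_ivl :: "(real ^ 'e) \<Rightarrow> 'e \<Rightarrow> real set" where
  "edge_ivl L j \<equiv> {0 .. L $ j}"

definition edge_deriv :: "(real ^ 'e) \<Rightarrow> ('e \<Rightarrow> real \<Rightarrow> complex) \<Rightarrow> 'e \<Rightarrow> real \<Rightarrow> complex" where
  "edge_deriv L f j t = vector_derivative (f j) (at t within edge_ivl L j)"

text \<open>Eigenspace Eig(Gamma, l, k) (including 0): functions f (f j is the restriction to
  edge e_j = [0, l_j]) which on each edge solve -f'' = k^2 f (classically, on the
  closed interval) and satisfy the standard (Neumann-Kirchhoff) vertex conditions.\<close>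
definition Eig :: "('e::finite \<Rightarrow> 'v) \<Rightarrow> ('e \<Rightarrow> 'v) \<Rightarrow> real ^ 'e \<Rightarrow> real
                   \<Rightarrow> ('e \<Rightarrow> real \<Rightarrow> complex) set" where
  "Eig org trm L k = {f.
     (\<forall>j. \<forall>t \<in> edge_ivl L j.
        f j differentiable (at t within edge_ivl L j) \<and>
        (edge_deriv L f j has_vector_derivative (- complex_of_real (k\<^sup>2) * f j t))
           (at t within edge_ivl L j)) \<and>
     (\<forall>j j'. org j = org j' \<longrightarrow> f j 0 = f j' 0) \<and>
     (\<forall>j j'. org j = trm j' \<longrightarrow> f j 0 = f j' (L $ j')) \<and>
     (\<forall>j j'. trm j = trm j' \<longrightarrow> f j (L $ j) = f j' (L $ j')) \<and>
     (\<forall>v. (\<Sum>j \<in> {j. org j = v}. edge_deriv L f j 0)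
          - (\<Sum>j \<in> {j. trm j = v}. edge_deriv L f j (L $ j)) = 0)}"

definition spec :: "('e::finite \<Rightarrow> 'v) \<Rightarrow> ('e \<Rightarrow> 'v) \<Rightarrow> real ^ 'e \<Rightarrow> real set" where
  "spec org trm L = {k. k \<ge> 0 \<and>
     (\<exists>f \<in> Eig org trm L k. \<exists>j. \<exists>t \<in> edge_ivl L j. f j t \<noteq> 0)}"

text \<open>tr_k(f): A_j = f_j(0), B_j = f_j'(0)/k, C_j = f_j(l_j), D_j = - f_j'(l_j)/k.
  For k = 0 we set B_j = D_j = 0 (as in the paper, where f is constant).\<close>
definition trace_vec :: "real ^ 'e \<Rightarrow> real \<Rightarrow> ('e \<Rightarrow> real \<Rightarrow> complex) \<Rightarrow> complex ^ ('e \<times> coord)" where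
  "trace_vec L k f = (\<chi> p. (case snd p of
       cA \<Rightarrow> f (fst p) 0
     | cB \<Rightarrow> (if k = 0 then 0 else edge_deriv L f (fst p) 0 / complex_of_real k)
     | cC \<Rightarrow> f (fst p) (L $ fst p)
     | cD \<Rightarrow> (if k = 0 then 0 else - edge_deriv L f (fst p) (L $ fst p) / complex_of_real k)))"

definition expkl :: "real \<Rightarrow> real ^ 'e \<Rightarrow> complex ^ 'e" where
  "expkl k L = (\<chi> j. exp (\<i> * complex_of_real (k * L $ j)))"

definition trace_space :: "('e::finite \<Rightarrow> 'v) \<Rightarrow> ('e \<Rightarrow> 'v)
                           \<Rightarrow> ((complex ^ 'e) \<times> (complex ^ ('e \<times> coord))) set" where
  "trace_space org trm = {(expkl k L, trace_vec L k f) | L k f.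
      (\<forall>j. L $ j > 0) \<and> k \<in> spec org trm L \<and> f \<in> Eig org trm L k}"

definition Sigma_set :: "('e::finite \<Rightarrow> 'v) \<Rightarrow> ('e \<Rightarrow> 'v) \<Rightarrow> (complex ^ 'e) set" where
  "Sigma_set org trm = fst ` trace_space org trm"

definition torus :: "(complex ^ 'e) set" where
  "torus = {z. \<forall>j. norm (z $ j) = 1}"

definition std_vertex_cond :: "('e::finite \<Rightarrow> 'v) \<Rightarrow> ('e \<Rightarrow> 'v) \<Rightarrow> complex ^ ('e \<times> coord) \<Rightarrow> bool" where
  "std_vertex_cond org trm x \<longleftrightarrow>
     (\<forall>j j'. org j = org j' \<longrightarrow> x $ (j, cA) = x $ (j', cA)) \<and>
     (\<forall>j j'. org j = trm j' \<longrightarrow> x $ (j, cA) = x $ (j', cC)) \<and>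
     (\<forall>j j'. trm j = trm j' \<longrightarrow> x $ (j, cC) = x $ (j', cC)) \<and>
     (\<forall>v. (\<Sum>j \<in> {j. org j = v}. x $ (j, cB)) + (\<Sum>j \<in> {j. trm j = v}. x $ (j, cD)) = 0)"

definition edge_cond :: "complex ^ 'e \<Rightarrow> complex ^ ('e \<times> coord) \<Rightarrow> bool" where
  "edge_cond z x \<longleftrightarrow> (\<forall>j.
     x $ (j, cA) + \<i> * x $ (j, cB) - z $ j * (x $ (j, cC) - \<i> * x $ (j, cD)) = 0 \<and>
     x $ (j, cC) + \<i> * x $ (j, cD) - z $ j * (x $ (j, cA) - \<i> * x $ (j, cB)) = 0)"

definition real_vec :: "complex ^ 'n \<Rightarrow> bool" where
  "real_vec x \<longleftrightarrow> (\<forall>i. x $ i \<in> \<real>)"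

end

theory Submission
  imports Defs
begin

lemma exp_vd:
  fixes c :: complex
  shows "((\<lambda>t::real. exp (c * of_real t)) has_vector_derivative (c * exp (c * of_real t))) (at t within S)"
proof -
  have "((\<lambda>w. exp (c * w)) has_field_derivative (c * exp (c * of_real t))) (at (of_real t))"
    by (auto intro!: derivative_eq_intros)
  from has_vector_derivative_real_field[OF this] show ?thesis by simp
qed

lemma ode_pos:
  fixes g g' :: "real \<Rightarrow> complex" and k l :: real
  assumes l: "l > 0" and k: "k > 0"
    and d1: "\<And>t. t \<in> {0..l} \<Longrightarrow> (g has_vector_derivative g' t) (at t within {0..l})"
    and d2: "\<And>t. t \<in> {0..l} \<Longrightarrow> (g' has_vector_derivative (- of_real (k\<^sup>2) * g t)) (at t within {0..l})"
  shows "g 0 + \<i> * (g' 0 / of_real k) = exp (\<i> * of_real (k * l)) * (g l - \<i> * (- g' l / of_real k))"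
    and "g l + \<i> * (- g' l / of_real k) = exp (\<i> * of_real (k * l)) * (g 0 - \<i> * (g' 0 / of_real k))"
proof -
  have kn: "(of_real k :: complex) \<noteq> 0" using k by simp
  define P where "P t = exp ((\<i> * of_real k) * of_real t) * (g t + \<i> * g' t / of_real k)" for t
  define Q where "Q t = exp ((- \<i> * of_real k) * of_real t) * (g t - \<i> * g' t / of_real k)" for t
  have "(P has_vector_derivative 0) (at t within {0..l})" if t: "t \<in> {0..l}" for t
  proof -
    have "(P has_vector_derivative
       (exp ((\<i> * of_real k) * of_real t) * (g' t + \<i> * (- of_real (k\<^sup>2) * g t) / of_real k)
        + (\<i> * of_real k) * exp ((\<i> * of_real k) * of_real t) * (g t + \<i> * g' t / of_real k)))
       (at t within {0..l})"
      unfolding P_def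
      by (intro has_vector_derivative_mult exp_vd has_vector_derivative_add
            has_vector_derivative_mult_right has_vector_derivative_divide d1 d2 t)
    moreover have "exp ((\<i> * of_real k) * of_real t) * (g' t + \<i> * (- of_real (k\<^sup>2) * g t) / of_real k)
        + (\<i> * of_real k) * exp ((\<i> * of_real k) * of_real t) * (g t + \<i> * g' t / of_real k) = 0"
      using kn by (simp add: field_simps power2_eq_square)
    ultimately show ?thesis by simp
  qed
  then obtain c where "\<And>t. t \<in> {0..l} \<Longrightarrow> P t = c"
    using has_vector_derivative_zero_constant[of "{0..l}" P] by auto
  then have Pe: "P 0 = P l" using l by auto
  have "(Q has_vector_derivative 0) (at t within {0..l})" if t: "t \<in> {0..l}" for t
  proof -
    have "(Q has_vector_derivative
       (exp ((- \<i> * of_real k) * of_real t) * (g' t - \<i> * (- of_real (k\<^sup>2) * g t) / of_real k)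
        + (- \<i> * of_real k) * exp ((- \<i> * of_real k) * of_real t) * (g t - \<i> * g' t / of_real k)))
       (at t within {0..l})"
      unfolding Q_def
      by (intro has_vector_derivative_mult exp_vd has_vector_derivative_diff
            has_vector_derivative_mult_right has_vector_derivative_divide d1 d2 t)
    moreover have "exp ((- \<i> * of_real k) * of_real t) * (g' t - \<i> * (- of_real (k\<^sup>2) * g t) / of_real k)
        + (- \<i> * of_real k) * exp ((- \<i> * of_real k) * of_real t) * (g t - \<i> * g' t / of_real k) = 0"
      using kn by (simp add: field_simps power2_eq_square)
    ultimately show ?thesis by simp
  qed
  then obtain c where "\<And>t. t \<in> {0..l} \<Longrightarrow> Q t = c"
    using has_vector_derivative_zero_constant[of "{0..l}" Q] by auto
  then have Qe: "Q 0 = Q l" using l by auto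
  have E: "exp (\<i> * of_real (k * l)) * exp ((- \<i> * of_real k) * of_real l) = 1"
    by (simp add: exp_add[symmetric])
  show "g 0 + \<i> * (g' 0 / of_real k) = exp (\<i> * of_real (k * l)) * (g l - \<i> * (- g' l / of_real k))"
    using Pe unfolding P_def by (simp add: exp_add[symmetric] algebra_simps)
  show "g l + \<i> * (- g' l / of_real k) = exp (\<i> * of_real (k * l)) * (g 0 - \<i> * (g' 0 / of_real k))"
  proof -
    have "exp (\<i> * of_real (k * l)) * Q l = exp (\<i> * of_real (k * l)) * Q 0" using Qe by simp
    then show ?thesis unfolding Q_def using E
      by (simp add: exp_add[symmetric] algebra_simps)
  qed
qed

lemma ode_zero:
  fixes g g' :: "real \<Rightarrow> complex" and l :: real
  assumes l: "l > 0"
    and d1: "\<And>t. t \<in> {0..l} \<Longrightarrow> (g has_vector_derivative g' t) (at t within {0..l})"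
    and d2: "\<And>t. t \<in> {0..l} \<Longrightarrow> (g' has_vector_derivative 0) (at t within {0..l})"
  shows "g' l = g' 0" and "g l = g 0 + of_real l * g' 0"
proof -
  obtain c where c: "\<And>t. t \<in> {0..l} \<Longrightarrow> g' t = c"
    using has_vector_derivative_zero_constant[of "{0..l}" g'] d2 by auto
  then show "g' l = g' 0" using l by auto
  have "((\<lambda>t. g t - of_real t * c) has_vector_derivative 0) (at t within {0..l})" if t: "t \<in> {0..l}" for t
  proof -
    have "((\<lambda>t. g t - of_real t * c) has_vector_derivative (g' t - 1 * c)) (at t within {0..l})"
      by (intro has_vector_derivative_diff d1 t has_vector_derivative_mult_left has_vector_derivative_of_real)
         (auto intro!: derivative_eq_intros)
    then show ?thesis using c[OF t] by simp
  qed
  then obtain d where "\<And>t. t \<in> {0..l} \<Longrightarrow> g t - of_real t * c = d"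
    using has_vector_derivative_zero_constant[of "{0..l}" "\<lambda>t. g t - of_real t * c"] by auto
  from this[of 0] this[of l] c[of 0] l show "g l = g 0 + of_real l * g' 0" by (auto simp: algebra_simps)
qed

lemma eig_derivs:
  assumes "f \<in> Eig org trm L k" "t \<in> {0..L$j}"
  shows "(f j has_vector_derivative edge_deriv L f j t) (at t within {0..L$j})"
    and "(edge_deriv L f j has_vector_derivative (- of_real (k\<^sup>2) * f j t)) (at t within {0..L$j})"
  using assms unfolding Eig_def
  by (auto simp: edge_deriv_def vector_derivative_works[symmetric])

lemma zero_const:
  fixes org trm :: "'e::finite \<Rightarrow> 'v"
  assumes Lpos: "\<forall>j. L$j > 0" and f: "f \<in> Eig org trm L 0"
  shows "f j (L$j) = f j 0"
proof -
  define b where "b j = edge_deriv L f j 0" for j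
  have od: "edge_deriv L f j (L$j) = b j \<and> f j (L$j) = f j 0 + of_real (L$j) * b j" for j
  proof -
    have d2: "(edge_deriv L f j has_vector_derivative 0) (at t within {0..L$j})" if "t \<in> {0..L$j}" for t
      using eig_derivs(2)[OF f that] by simp
    have "edge_deriv L f j (L$j) = edge_deriv L f j 0 \<and> f j (L$j) = f j 0 + of_real (L$j) * edge_deriv L f j 0"
      using ode_zero[of "L$j" "f j" "edge_deriv L f j", OF Lpos[rule_format] eig_derivs(1)[OF f] d2] by blast
    then show ?thesis by (simp add: b_def)
  qed
  have Ef: "(\<forall>j j'. org j = org j' \<longrightarrow> f j 0 = f j' 0) \<and>
     (\<forall>j j'. org j = trm j' \<longrightarrow> f j 0 = f j' (L $ j')) \<and>
     (\<forall>j j'. trm j = trm j' \<longrightarrow> f j (L $ j) = f j' (L $ j')) \<and>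
     (\<forall>v. (\<Sum>j \<in> {j. org j = v}. edge_deriv L f j 0)
          - (\<Sum>j \<in> {j. trm j = v}. edge_deriv L f j (L $ j)) = 0)"
    using f unfolding Eig_def mem_Collect_eq by (elim conjE) (intro conjI; assumption)
  define \<phi> where "\<phi> v = (if \<exists>j. org j = v then f (SOME j. org j = v) 0
        else f (SOME j. trm j = v) (L $ (SOME j. trm j = v)))" for v
  have pa: "f j 0 = \<phi> (org j)" for j
  proof -
    have 1: "org (SOME j'. org j' = org j) = org j" by (rule someI) auto
    have "\<phi> (org j) = f (SOME j'. org j' = org j) 0" unfolding \<phi>_def by auto
    then show ?thesis using Ef 1 by metis
  qed
  have pc: "f j (L$j) = \<phi> (trm j)" for j
  proof (cases "\<exists>j'. org j' = trm j")
    case True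
    then have "org (SOME j'. org j' = trm j) = trm j" by (rule someI_ex)
    then show ?thesis using Ef True unfolding \<phi>_def by metis
  next
    case False
    have "trm (SOME j'. trm j' = trm j) = trm j" by (rule someI) auto
    then show ?thesis using Ef False unfolding \<phi>_def by metis
  qed
  have K: "(\<Sum>j \<in> {j. org j = v}. b j) - (\<Sum>j \<in> {j. trm j = v}. b j) = 0" for v
  proof -
    have "(\<Sum>j \<in> {j. trm j = v}. edge_deriv L f j (L $ j)) = (\<Sum>j \<in> {j. trm j = v}. b j)"
      using od by (intro sum.cong) auto
    then show ?thesis using Ef unfolding b_def by metis
  qed
  define V where "V = range org \<union> range trm"
  have fV: "finite V" unfolding V_def by simp
  have g1: "(\<Sum>j\<in>UNIV. h (trm j) * cnj (b j)) = (\<Sum>v\<in>V. h v * (\<Sum>j\<in>{j. trm j = v}. cnj (b j)))" for h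
  proof -
    have "(\<Sum>j\<in>UNIV. h (trm j) * cnj (b j)) = (\<Sum>v\<in>V. \<Sum>j\<in>{x \<in> UNIV. trm x = v}. h (trm j) * cnj (b j))"
      by (rule sum.group[symmetric]) (auto simp: fV V_def)
    also have "\<dots> = (\<Sum>v\<in>V. h v * (\<Sum>j\<in>{j. trm j = v}. cnj (b j)))"
      by (auto simp: sum_distrib_left intro!: sum.cong)
    finally show ?thesis .
  qed
  have g2: "(\<Sum>j\<in>UNIV. h (org j) * cnj (b j)) = (\<Sum>v\<in>V. h v * (\<Sum>j\<in>{j. org j = v}. cnj (b j)))" for h
  proof -
    have "(\<Sum>j\<in>UNIV. h (org j) * cnj (b j)) = (\<Sum>v\<in>V. \<Sum>j\<in>{x \<in> UNIV. org x = v}. h (org j) * cnj (b j))"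
      by (rule sum.group[symmetric]) (auto simp: fV V_def)
    also have "\<dots> = (\<Sum>v\<in>V. h v * (\<Sum>j\<in>{j. org j = v}. cnj (b j)))"
      by (auto simp: sum_distrib_left intro!: sum.cong)
    finally show ?thesis .
  qed
  have "(\<Sum>j\<in>UNIV. (\<phi> (trm j) - \<phi> (org j)) * cnj (b j))
      = (\<Sum>v\<in>V. \<phi> v * ((\<Sum>j\<in>{j. trm j = v}. cnj (b j)) - (\<Sum>j\<in>{j. org j = v}. cnj (b j))))"
    by (simp add: left_diff_distrib sum_subtractf g1 g2 right_diff_distrib)
  also have "\<dots> = 0"
  proof (rule sum.neutral, rule ballI)
    fix v
    have "cnj ((\<Sum>j \<in> {j. org j = v}. b j) - (\<Sum>j \<in> {j. trm j = v}. b j)) = 0" using K by simp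
    then have "(\<Sum>j\<in>{j. trm j = v}. cnj (b j)) - (\<Sum>j\<in>{j. org j = v}. cnj (b j)) = 0"
      by (simp add: cnj_sum)
    then show "\<phi> v * ((\<Sum>j\<in>{j. trm j = v}. cnj (b j)) - (\<Sum>j\<in>{j. org j = v}. cnj (b j))) = 0" by simp
  qed
  finally have S0: "(\<Sum>j\<in>UNIV. (\<phi> (trm j) - \<phi> (org j)) * cnj (b j)) = 0" .
  have "(\<phi> (trm j) - \<phi> (org j)) * cnj (b j) = of_real (L$j * (cmod (b j))\<^sup>2)" for j
  proof -
    have "(\<phi> (trm j) - \<phi> (org j)) * cnj (b j) = of_real (L$j) * (b j * cnj (b j))"
      using od[of j] pa[of j] pc[of j] by (simp add: algebra_simps)
    also have "\<dots> = of_real (L$j * (cmod (b j))\<^sup>2)"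
      by (simp only: complex_norm_square of_real_mult)
    finally show ?thesis .
  qed
  with S0 have "of_real (\<Sum>j\<in>UNIV. L$j * (cmod (b j))\<^sup>2) = (0::complex)"
    by simp
  then have "(\<Sum>j\<in>UNIV. L$j * (cmod (b j))\<^sup>2) = 0" by (simp only: of_real_eq_0_iff)
  then have "L$j * (cmod (b j))\<^sup>2 = 0"
    using sum_nonneg_eq_0_iff[of UNIV "\<lambda>j. L$j * (cmod (b j))\<^sup>2"] Lpos
    by (simp add: less_imp_le)
  then have "b j = 0" using Lpos[rule_format, of j] by simp
  then show ?thesis using od[of j] by simp
qed

lemma trace_vec_simps:
  "trace_vec L k f $ (j, cA) = f j 0"
  "trace_vec L k f $ (j, cB) = (if k = 0 then 0 else edge_deriv L f j 0 / complex_of_real k)"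
  "trace_vec L k f $ (j, cC) = f j (L $ j)"
  "trace_vec L k f $ (j, cD) = (if k = 0 then 0 else - edge_deriv L f j (L $ j) / complex_of_real k)"
  by (simp_all add: trace_vec_def)

lemma fwd:
  fixes org trm :: "'e::finite \<Rightarrow> 'v"
  assumes Lpos: "\<forall>j. L$j > 0" and k: "k \<ge> 0" and f: "f \<in> Eig org trm L k"
  shows "expkl k L \<in> torus" "std_vertex_cond org trm (trace_vec L k f)"
    "edge_cond (expkl k L) (trace_vec L k f)"
proof -
  show "expkl k L \<in> torus" unfolding torus_def expkl_def by (simp add: norm_exp_eq_Re)
  have Ef: "(\<forall>j j'. org j = org j' \<longrightarrow> f j 0 = f j' 0) \<and>
     (\<forall>j j'. org j = trm j' \<longrightarrow> f j 0 = f j' (L $ j')) \<and>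
     (\<forall>j j'. trm j = trm j' \<longrightarrow> f j (L $ j) = f j' (L $ j')) \<and>
     (\<forall>v. (\<Sum>j \<in> {j. org j = v}. edge_deriv L f j 0)
          - (\<Sum>j \<in> {j. trm j = v}. edge_deriv L f j (L $ j)) = 0)"
    using f unfolding Eig_def mem_Collect_eq by (elim conjE) (intro conjI; assumption)
  show "std_vertex_cond org trm (trace_vec L k f)"
    unfolding std_vertex_cond_def trace_vec_simps
  proof (intro conjI)
    show "\<forall>v. (\<Sum>j | org j = v. if k = 0 then 0 else edge_deriv L f j 0 / complex_of_real k) +
        (\<Sum>j | trm j = v. if k = 0 then 0 else - edge_deriv L f j (L $ j) / complex_of_real k) = 0"
    proof (cases "k = 0")
      case False
      show ?thesis
      proof
        fix v
        have "(\<Sum>j | org j = v. edge_deriv L f j 0 / complex_of_real k) +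
          (\<Sum>j | trm j = v. - edge_deriv L f j (L $ j) / complex_of_real k)
          = ((\<Sum>j | org j = v. edge_deriv L f j 0) - (\<Sum>j | trm j = v. edge_deriv L f j (L $ j))) / complex_of_real k"
          by (simp add: sum_divide_distrib sum_negf diff_divide_distrib)
        also have "\<dots> = 0" using Ef by simp
        finally show "(\<Sum>j | org j = v. if k = 0 then 0 else edge_deriv L f j 0 / complex_of_real k) +
          (\<Sum>j | trm j = v. if k = 0 then 0 else - edge_deriv L f j (L $ j) / complex_of_real k) = 0"
          using False by simp
      qed
    qed simp
  qed (use Ef in blast)+
  show "edge_cond (expkl k L) (trace_vec L k f)"
    unfolding edge_cond_def trace_vec_simps
  proof
    fix j
    show "f j 0 + \<i> * (if k = 0 then 0 else edge_deriv L f j 0 / complex_of_real k) -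
       expkl k L $ j * (f j (L $ j) - \<i> * (if k = 0 then 0 else - edge_deriv L f j (L $ j) / complex_of_real k)) = 0 \<and>
       f j (L $ j) + \<i> * (if k = 0 then 0 else - edge_deriv L f j (L $ j) / complex_of_real k) -
       expkl k L $ j * (f j 0 - \<i> * (if k = 0 then 0 else edge_deriv L f j 0 / complex_of_real k)) = 0"
    proof (cases "k = 0")
      case True
      then have "f j (L$j) = f j 0" using zero_const[OF Lpos] f by blast
      then show ?thesis using True by (simp add: expkl_def)
    next
      case False
      then have kp: "k > 0" using k by simp
      note o = ode_pos[OF Lpos[rule_format, of j] kp eig_derivs[OF f]]
      show ?thesis using False o unfolding expkl_def by simp
    qed
  qed
qed

lemma alg:
  fixes A B C D :: complex and c s :: real
  assumes cs: "c\<^sup>2 + s\<^sup>2 = 1"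
    and e1: "A + \<i>*B - (of_real c + \<i> * of_real s) * (C - \<i>*D) = 0"
    and e2: "C + \<i>*D - (of_real c + \<i> * of_real s) * (A - \<i>*B) = 0"
  shows "C = A * of_real c + B * of_real s \<and> D = A * of_real s - B * of_real c"
proof -
  have ii: "\<i> * \<i> = (-1::complex)" by simp
  have cs': "(of_real c)^2 + (of_real s)^2 = (1::complex)"
    by (metis cs of_real_1 of_real_add of_real_power)
  show ?thesis using ii cs' e1 e2 by algebra
qed

lemma angle:
  assumes "norm w = 1"
  shows "\<exists>\<theta>. 0 < \<theta> \<and> \<theta> \<le> 2*pi \<and> exp (\<i> * of_real \<theta>) = w"
proof -
  have w0: "w \<noteq> 0" using assms by auto
  have cw: "cis (Arg w) = w" using cis_Arg[OF w0] assms by (simp add: sgn_div_norm)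
  have b: "- pi < Arg w \<and> Arg w \<le> pi" by (rule Arg_bounded)
  show ?thesis
  proof (cases "Arg w > 0")
    case True
    then show ?thesis using b cw by (intro exI[of _ "Arg w"]) (auto simp: cis_conv_exp)
  next
    case False
    have "cis (Arg w + 2*pi) = cis (Arg w)" by (simp add: complex_eq_iff)
    then show ?thesis using b cw False by (intro exI[of _ "Arg w + 2*pi"]) (auto simp: cis_conv_exp)
  qed
qed

lemma cossin_vd:
  fixes a b :: complex
  shows "((\<lambda>t. a * of_real (cos t) + b * of_real (sin t)) has_vector_derivative
          (- a * of_real (sin t) + b * of_real (cos t))) (at t within S)"
proof -
  have "((\<lambda>t. a * of_real (cos t) + b * of_real (sin t)) has_vector_derivative
          (a * of_real (- sin t) + b * of_real (cos t))) (at t within S)"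
    by (intro has_vector_derivative_add has_vector_derivative_mult_right has_vector_derivative_of_real)
       (auto intro!: derivative_eq_intros)
  then show ?thesis by simp
qed

lemma bwd:
  fixes org trm :: "'e::finite \<Rightarrow> 'v"
  assumes z: "z \<in> torus" and sv: "std_vertex_cond org trm x" and ec: "edge_cond z x"
  shows "\<exists>L f. (\<forall>j. L$j > 0) \<and> expkl 1 L = z \<and> f \<in> Eig org trm L 1 \<and> trace_vec L 1 f = x
           \<and> (x \<noteq> 0 \<longrightarrow> (\<exists>j. \<exists>t \<in> {0..L$j}. f j t \<noteq> 0))"
proof -
  have "\<forall>j. \<exists>\<theta>. 0 < \<theta> \<and> \<theta> \<le> 2*pi \<and> exp (\<i> * of_real \<theta>) = z$j"
    using z angle unfolding torus_def by blast
  then obtain th where th: "\<And>j. 0 < th j \<and> th j \<le> 2*pi \<and> exp (\<i> * of_real (th j)) = z$j"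
    by metis
  define L :: "real ^ 'e" where "L = (\<chi> j. th j)"
  have Lj: "L$j = th j" for j unfolding L_def by simp
  define A where "A j = x$(j,cA)" for j
  define B where "B j = x$(j,cB)" for j
  define f where "f j t = A j * of_real (cos t) + B j * of_real (sin t)" for j t
  define f' where "f' j t = - A j * of_real (sin t) + B j * of_real (cos t)" for j t
  have d1: "(f j has_vector_derivative f' j t) (at t within S)" for j t S
    unfolding f_def f'_def by (rule cossin_vd)
  have d2: "(f' j has_vector_derivative (- of_real (1\<^sup>2) * f j t)) (at t within S)" for j t S
  proof -
    have e: "f' j = (\<lambda>t. B j * of_real (cos t) + (- A j) * of_real (sin t))"
      by (auto simp: f'_def fun_eq_iff)
    have "(f' j has_vector_derivative (- B j * of_real (sin t) + (- A j) * of_real (cos t))) (at t within S)"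
      unfolding e by (rule cossin_vd)
    then show ?thesis unfolding f_def by (simp add: algebra_simps)
  qed
  have ed: "edge_deriv L f j t = f' j t" if "t \<in> {0..L$j}" for j t
    unfolding edge_deriv_def
    by (rule vector_derivative_within_closed_interval) (use th[of j] that d1 in \<open>auto simp: Lj\<close>)
  have CD: "x$(j,cC) = f j (L$j) \<and> x$(j,cD) = - f' j (L$j)" for j
  proof -
    have zj: "z$j = of_real (cos (th j)) + \<i> * of_real (sin (th j))"
    proof -
      have "cis (th j) = of_real (cos (th j)) + \<i> * of_real (sin (th j))" by (simp add: complex_eq_iff)
      then show ?thesis using th[of j] by (simp add: cis_conv_exp)
    qed
    have "x$(j,cC) = A j * of_real (cos (th j)) + B j * of_real (sin (th j)) \<and>
          x$(j,cD) = A j * of_real (sin (th j)) - B j * of_real (cos (th j))"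
    proof -
      have e: "x $ (j, cA) + \<i> * x $ (j, cB) - z $ j * (x $ (j, cC) - \<i> * x $ (j, cD)) = 0 \<and>
         x $ (j, cC) + \<i> * x $ (j, cD) - z $ j * (x $ (j, cA) - \<i> * x $ (j, cB)) = 0"
        using ec unfolding edge_cond_def by blast
      show ?thesis unfolding A_def B_def
        by (rule alg) (use e in \<open>simp_all only: zj sin_cos_squared_add2 sin_cos_squared_add\<close>)
    qed
    then show ?thesis by (simp add: f_def f'_def Lj)
  qed
  have f0: "f j 0 = x$(j,cA)" for j by (simp add: f_def A_def)
  have fL: "f j (L$j) = x$(j,cC)" for j using CD[of j] by simp
  have f'0: "f' j 0 = x$(j,cB)" for j by (simp add: f'_def B_def)
  have ed0: "edge_deriv L f j 0 = x$(j,cB)" for j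
    using ed[of 0 j] th[of j] f'0 by (simp add: Lj)
  have edL: "edge_deriv L f j (L$j) = - x$(j,cD)" for j
    using ed[of "L$j" j] th[of j] CD[of j] by (simp add: Lj)
  have Lpos: "\<forall>j. L$j > 0" using th by (simp add: Lj)
  have sv': "(\<forall>j j'. org j = org j' \<longrightarrow> x $ (j, cA) = x $ (j', cA)) \<and>
     (\<forall>j j'. org j = trm j' \<longrightarrow> x $ (j, cA) = x $ (j', cC)) \<and>
     (\<forall>j j'. trm j = trm j' \<longrightarrow> x $ (j, cC) = x $ (j', cC)) \<and>
     (\<forall>v. (\<Sum>j \<in> {j. org j = v}. x $ (j, cB)) + (\<Sum>j \<in> {j. trm j = v}. x $ (j, cD)) = 0)"
    using sv unfolding std_vertex_cond_def .
  have fE: "f \<in> Eig org trm L 1"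
    unfolding Eig_def mem_Collect_eq
  proof (intro conjI allI ballI impI)
    fix j t assume t: "t \<in> {0..L$j}"
    show "f j differentiable at t within {0..L $ j}" using d1 by (rule differentiableI_vector)
    show "(edge_deriv L f j has_vector_derivative - complex_of_real (1\<^sup>2) * f j t) (at t within {0..L $ j})"
      by (rule has_vector_derivative_transform[OF t _ d2]) (rule ed)
  next
    fix v
    show "(\<Sum>j | org j = v. edge_deriv L f j 0) - (\<Sum>j | trm j = v. edge_deriv L f j (L $ j)) = 0"
      using sv' by (simp add: ed0 edL sum_negf)
  qed (unfold f0 fL, insert sv', blast+)
  have tr: "trace_vec L 1 f = x"
    unfolding vec_eq_iff
  proof
    fix p :: "'e \<times> coord"
    obtain j c where p: "p = (j, c)" by (cases p)
    show "trace_vec L 1 f $ p = x $ p"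
      unfolding p by (cases c) (simp_all add: trace_vec_simps f0 ed0 edL fL)
  qed
  have nz: "\<exists>j. \<exists>t \<in> {0..L$j}. f j t \<noteq> 0" if x0: "x \<noteq> 0"
  proof (rule ccontr)
    assume "\<not> ?thesis"
    then have all0: "\<And>j t. t \<in> {0..L$j} \<Longrightarrow> f j t = 0" by blast
    have "x $ p = 0" for p
    proof -
      obtain j c where p: "p = (j, c)" by (cases p)
      have a: "A j = 0" using all0[of 0 j] Lpos by (simp add: f_def less_imp_le)
      have "sin (L$j / 4) > 0" using th[of j] by (intro sin_gt_zero) (auto simp: Lj)
      moreover have "f j (L$j/4) = 0" using all0[of "L$j/4" j] Lpos by (simp add: less_imp_le)
      ultimately have b: "B j = 0" using a by (simp add: f_def)
      show ?thesis using CD[of j] a b unfolding p A_def B_def f_def f'_def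
        by (cases c) auto
    qed
    then have "x = 0" by (simp add: vec_eq_iff)
    with x0 show False by simp
  qed
  have "expkl 1 L = z" unfolding expkl_def vec_eq_iff using th by (simp add: Lj)
  then show ?thesis using Lpos fE tr nz by blast
qed

lemma zero_eig:
  fixes org trm :: "'e::finite \<Rightarrow> 'v"
  assumes Lpos: "\<forall>j. L$j > 0"
  shows "(\<lambda>j t. 0) \<in> Eig org trm L k" and "trace_vec L k (\<lambda>j t. 0) = 0"
proof -
  have ed: "edge_deriv L (\<lambda>j t. 0) j t = 0" if "t \<in> {0..L$j}" for j t
    unfolding edge_deriv_def
    by (rule vector_derivative_within_closed_interval) (use Lpos that in auto)
  have ed0: "edge_deriv L (\<lambda>j t. 0) j 0 = 0" "edge_deriv L (\<lambda>j t. 0) j (L$j) = 0" for j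
    using ed Lpos by (auto simp: less_imp_le)
  show "(\<lambda>j t. 0) \<in> Eig org trm L k"
    unfolding Eig_def mem_Collect_eq
  proof (intro conjI allI ballI impI)
    fix j t assume t: "t \<in> {0..L$j}"
    show "(\<lambda>t. 0::complex) differentiable at t within {0..L $ j}" by simp
    show "(edge_deriv L (\<lambda>j t. 0) j has_vector_derivative - complex_of_real (k\<^sup>2) * 0) (at t within {0..L $ j})"
      by (rule has_vector_derivative_transform[OF t ed]) auto
  qed (simp_all add: ed0)
  show "trace_vec L k (\<lambda>j t. 0) = 0"
    unfolding vec_eq_iff
  proof
    fix p :: "'e \<times> coord"
    obtain j c where p: "p = (j, c)" by (cases p)
    show "trace_vec L k (\<lambda>j t. 0) $ p = 0 $ p"
      unfolding p by (cases c) (simp_all add: trace_vec_simps ed0)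
  qed
qed

lemma part1:
  fixes org trm :: "'e::finite \<Rightarrow> 'v"
  shows "trace_space org trm =
           {(z, x). z \<in> torus \<and> std_vertex_cond org trm x \<and> edge_cond z x
                    \<and> (x \<noteq> 0 \<or> z \<in> Sigma_set org trm)}"
proof
  show "trace_space org trm \<subseteq> {(z, x). z \<in> torus \<and> std_vertex_cond org trm x \<and> edge_cond z x
                    \<and> (x \<noteq> 0 \<or> z \<in> Sigma_set org trm)}"
  proof
    fix p assume p: "p \<in> trace_space org trm"
    then obtain L k f where e: "p = (expkl k L, trace_vec L k f)" "\<forall>j. L $ j > 0"
       "k \<in> spec org trm L" "f \<in> Eig org trm L k"
      unfolding trace_space_def by blast
    have k: "k \<ge> 0" using e(3) unfolding spec_def by simp
    have "fst p \<in> Sigma_set org trm" using p unfolding Sigma_set_def by blast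
    then show "p \<in> {(z, x). z \<in> torus \<and> std_vertex_cond org trm x \<and> edge_cond z x
                    \<and> (x \<noteq> 0 \<or> z \<in> Sigma_set org trm)}"
      using fwd[OF e(2) k e(4)] e(1) by auto
  qed
  show "{(z, x). z \<in> torus \<and> std_vertex_cond org trm x \<and> edge_cond z x
                    \<and> (x \<noteq> 0 \<or> z \<in> Sigma_set org trm)} \<subseteq> trace_space org trm"
  proof (rule subsetI)
    fix p assume "p \<in> {(z, x). z \<in> torus \<and> std_vertex_cond org trm x \<and> edge_cond z x
                    \<and> (x \<noteq> 0 \<or> z \<in> Sigma_set org trm)}"
    then obtain z x where px: "p = (z, x)" and z: "z \<in> torus" and sv: "std_vertex_cond org trm x" and ec: "edge_cond z x"
      and alt: "x \<noteq> 0 \<or> z \<in> Sigma_set org trm" by blast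
    have "(z, x) \<in> trace_space org trm"
    proof (cases "x = 0")
      case False
      obtain L f where b: "\<forall>j. L$j > 0" "expkl 1 L = z" "f \<in> Eig org trm L 1" "trace_vec L 1 f = x"
           "x \<noteq> 0 \<longrightarrow> (\<exists>j. \<exists>t \<in> {0..L$j}. f j t \<noteq> 0)"
        using bwd[OF z sv ec] by blast
      have "(1::real) \<in> spec org trm L" unfolding spec_def using b(3,5) False by auto
      then show ?thesis unfolding trace_space_def using b by blast
    next
      case True
      then have "z \<in> Sigma_set org trm" using alt by simp
      then obtain L k f where e: "z = expkl k L" "\<forall>j. L $ j > 0"
         "k \<in> spec org trm L" "f \<in> Eig org trm L k"
        unfolding Sigma_set_def trace_space_def by auto
      have "(z, 0) \<in> trace_space org trm" unfolding trace_space_def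
        using e zero_eig[OF e(2)] by (auto intro!: exI[of _ L] exI[of _ k] exI[of _ "\<lambda>j t. 0"])
      then show ?thesis using True by simp
    qed
    then show "p \<in> trace_space org trm" using px by simp
  qed
qed

definition cnjv :: "complex ^ 'n \<Rightarrow> complex ^ 'n" where
  "cnjv x = (\<chi> i. cnj (x $ i))"

lemma std_zero: "std_vertex_cond org trm 0"
  unfolding std_vertex_cond_def by simp

lemma std_lin:
  assumes x: "std_vertex_cond org trm x" and y: "std_vertex_cond org trm y"
  shows "std_vertex_cond org trm (a *s x + b *s y)"
proof -
  note x' = x[unfolded std_vertex_cond_def]
  note y' = y[unfolded std_vertex_cond_def]
  show ?thesis unfolding std_vertex_cond_def
  proof (intro conjI allI impI)
    fix j j' :: 'a
    have xa: "\<forall>j j'. org j = org j' \<longrightarrow> x $ (j, cA) = x $ (j', cA)"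
     and xb: "\<forall>j j'. org j = trm j' \<longrightarrow> x $ (j, cA) = x $ (j', cC)"
     and xc: "\<forall>j j'. trm j = trm j' \<longrightarrow> x $ (j, cC) = x $ (j', cC)" using x' by blast+
    have ya: "\<forall>j j'. org j = org j' \<longrightarrow> y $ (j, cA) = y $ (j', cA)"
     and yb: "\<forall>j j'. org j = trm j' \<longrightarrow> y $ (j, cA) = y $ (j', cC)"
     and yc: "\<forall>j j'. trm j = trm j' \<longrightarrow> y $ (j, cC) = y $ (j', cC)" using y' by blast+
    show "(a *s x + b *s y) $ (j, cA) = (a *s x + b *s y) $ (j', cA)" if h: "org j = org j'"
      using xa[rule_format, OF h] ya[rule_format, OF h] by simp
    show "(a *s x + b *s y) $ (j, cA) = (a *s x + b *s y) $ (j', cC)" if h: "org j = trm j'"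
      using xb[rule_format, OF h] yb[rule_format, OF h] by simp
    show "(a *s x + b *s y) $ (j, cC) = (a *s x + b *s y) $ (j', cC)" if h: "trm j = trm j'"
      using xc[rule_format, OF h] yc[rule_format, OF h] by simp
  next
    fix v
    have sx: "(\<Sum>j | org j = v. x $ (j, cB)) + (\<Sum>j | trm j = v. x $ (j, cD)) = 0" using x' by blast
    have sy: "(\<Sum>j | org j = v. y $ (j, cB)) + (\<Sum>j | trm j = v. y $ (j, cD)) = 0" using y' by blast
    have "(\<Sum>j | org j = v. (a *s x + b *s y) $ (j, cB)) + (\<Sum>j | trm j = v. (a *s x + b *s y) $ (j, cD))
        = a * ((\<Sum>j | org j = v. x $ (j, cB)) + (\<Sum>j | trm j = v. x $ (j, cD)))
          + b * ((\<Sum>j | org j = v. y $ (j, cB)) + (\<Sum>j | trm j = v. y $ (j, cD)))"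
      by (simp only: vector_add_component vector_smult_component sum.distrib sum_distrib_left distrib_left add_ac)
    also have "\<dots> = 0" by (simp only: sx sy mult_zero_right add_0)
    finally show "(\<Sum>j | org j = v. (a *s x + b *s y) $ (j, cB)) + (\<Sum>j | trm j = v. (a *s x + b *s y) $ (j, cD)) = 0" .
  qed
qed

lemma std_cnj:
  assumes x: "std_vertex_cond org trm x"
  shows "std_vertex_cond org trm (cnjv x)"
proof -
  note x' = x[unfolded std_vertex_cond_def]
  have xa: "\<forall>j j'. org j = org j' \<longrightarrow> x $ (j, cA) = x $ (j', cA)"
     and xb: "\<forall>j j'. org j = trm j' \<longrightarrow> x $ (j, cA) = x $ (j', cC)"
     and xc: "\<forall>j j'. trm j = trm j' \<longrightarrow> x $ (j, cC) = x $ (j', cC)" using x' by blast+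
  have c: "cnjv x $ p = cnj (x $ p)" for p unfolding cnjv_def by simp
  show ?thesis unfolding std_vertex_cond_def c
  proof (intro conjI allI impI)
    fix v
    have sx: "(\<Sum>j | org j = v. x $ (j, cB)) + (\<Sum>j | trm j = v. x $ (j, cD)) = 0" using x' by blast
    then have "cnj ((\<Sum>j | org j = v. x $ (j, cB)) + (\<Sum>j | trm j = v. x $ (j, cD))) = 0" by simp
    then show "(\<Sum>j | org j = v. cnj (x $ (j, cB))) + (\<Sum>j | trm j = v. cnj (x $ (j, cD))) = 0"
      by (simp only: cnj_sum complex_cnj_add)
  next
    fix j j' :: 'a
    show "cnj (x $ (j, cA)) = cnj (x $ (j', cA))" if h: "org j = org j'"
      using xa[rule_format, OF h] by simp
    show "cnj (x $ (j, cA)) = cnj (x $ (j', cC))" if h: "org j = trm j'"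
      using xb[rule_format, OF h] by simp
    show "cnj (x $ (j, cC)) = cnj (x $ (j', cC))" if h: "trm j = trm j'"
      using xc[rule_format, OF h] by simp
  qed
qed

lemma edge_zero: "edge_cond z 0"
  unfolding edge_cond_def by simp

lemma edge_lin:
  assumes hx: "edge_cond z x" and hy: "edge_cond z y"
  shows "edge_cond z (a *s x + b *s y)"
  unfolding edge_cond_def
proof
  fix j
  have ex: "x $ (j, cA) + \<i> * x $ (j, cB) - z $ j * (x $ (j, cC) - \<i> * x $ (j, cD)) = 0 \<and>
       x $ (j, cC) + \<i> * x $ (j, cD) - z $ j * (x $ (j, cA) - \<i> * x $ (j, cB)) = 0"
    using hx unfolding edge_cond_def by blast
  have ey: "y $ (j, cA) + \<i> * y $ (j, cB) - z $ j * (y $ (j, cC) - \<i> * y $ (j, cD)) = 0 \<and>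
       y $ (j, cC) + \<i> * y $ (j, cD) - z $ j * (y $ (j, cA) - \<i> * y $ (j, cB)) = 0"
    using hy unfolding edge_cond_def by blast
  let ?w = "a *s x + b *s y"
  have 1: "?w $ (j, cA) + \<i> * ?w $ (j, cB) - z $ j * (?w $ (j, cC) - \<i> * ?w $ (j, cD))
     = a * (x $ (j, cA) + \<i> * x $ (j, cB) - z $ j * (x $ (j, cC) - \<i> * x $ (j, cD)))
     + b * (y $ (j, cA) + \<i> * y $ (j, cB) - z $ j * (y $ (j, cC) - \<i> * y $ (j, cD)))"
    by (simp add: algebra_simps)
  have 2: "?w $ (j, cC) + \<i> * ?w $ (j, cD) - z $ j * (?w $ (j, cA) - \<i> * ?w $ (j, cB))
     = a * (x $ (j, cC) + \<i> * x $ (j, cD) - z $ j * (x $ (j, cA) - \<i> * x $ (j, cB)))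
     + b * (y $ (j, cC) + \<i> * y $ (j, cD) - z $ j * (y $ (j, cA) - \<i> * y $ (j, cB)))"
    by (simp add: algebra_simps)
  show "?w $ (j, cA) + \<i> * ?w $ (j, cB) - z $ j * (?w $ (j, cC) - \<i> * ?w $ (j, cD)) = 0 \<and>
     ?w $ (j, cC) + \<i> * ?w $ (j, cD) - z $ j * (?w $ (j, cA) - \<i> * ?w $ (j, cB)) = 0"
    unfolding 1 2 using ex ey by simp
qed

lemma edge_cnj:
  assumes z: "z \<in> torus" and h: "edge_cond z x"
  shows "edge_cond z (cnjv x)"
  unfolding edge_cond_def
proof
  fix j
  have e: "x $ (j, cA) + \<i> * x $ (j, cB) - z $ j * (x $ (j, cC) - \<i> * x $ (j, cD)) = 0 \<and>
       x $ (j, cC) + \<i> * x $ (j, cD) - z $ j * (x $ (j, cA) - \<i> * x $ (j, cB)) = 0"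
    using h unfolding edge_cond_def by blast
  have n: "z $ j * cnj (z $ j) = 1"
    using z unfolding torus_def by (simp add: complex_norm_square[symmetric])
  define a where "a = x $ (j, cA)"
  define b where "b = x $ (j, cB)"
  define c where "c = x $ (j, cC)"
  define d where "d = x $ (j, cD)"
  define w where "w = z $ j"
  have e1: "a + \<i> * b - w * (c - \<i> * d) = 0" and e2: "c + \<i> * d - w * (a - \<i> * b) = 0"
    using e unfolding a_def b_def c_def d_def w_def by auto
  have n': "w * cnj w = 1" using n unfolding w_def .
  have f1: "cnj a - \<i> * cnj b - cnj w * (cnj c + \<i> * cnj d) = 0"
    using arg_cong[OF e1, of cnj] by simp
  have f2: "cnj c - \<i> * cnj d - cnj w * (cnj a + \<i> * cnj b) = 0"
    using arg_cong[OF e2, of cnj] by simp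
  have g1: "cnj a + \<i> * cnj b - w * (cnj c - \<i> * cnj d) = 0"
    using f2 n' by algebra
  have g2: "cnj c + \<i> * cnj d - w * (cnj a - \<i> * cnj b) = 0"
    using f1 n' by algebra
  show "cnjv x $ (j, cA) + \<i> * cnjv x $ (j, cB) - z $ j * (cnjv x $ (j, cC) - \<i> * cnjv x $ (j, cD)) = 0 \<and>
       cnjv x $ (j, cC) + \<i> * cnjv x $ (j, cD) - z $ j * (cnjv x $ (j, cA) - \<i> * cnjv x $ (j, cB)) = 0"
    using g1 g2 unfolding cnjv_def a_def b_def c_def d_def w_def by simp
qed

theorem mainTheorem6:
  fixes org trm :: "'e::finite \<Rightarrow> 'v"
  shows "trace_space org trm =
           {(z, x). z \<in> torus \<and> std_vertex_cond org trm x \<and> edge_cond z x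
                    \<and> (x \<noteq> 0 \<or> z \<in> Sigma_set org trm)}
       \<and> (\<forall>z \<in> Sigma_set org trm.
            vec.subspace {x. (z, x) \<in> trace_space org trm} \<and>
            (\<exists>Bs. (\<forall>b \<in> Bs. real_vec b) \<and> vec.independent Bs \<and>
                  vec.span Bs = {x. (z, x) \<in> trace_space org trm}))"
proof (intro conjI ballI)
  note P1 = part1[of org trm]
  show "trace_space org trm =
           {(z, x). z \<in> torus \<and> std_vertex_cond org trm x \<and> edge_cond z x
                    \<and> (x \<noteq> 0 \<or> z \<in> Sigma_set org trm)}" by (rule P1)
  fix z assume zS: "z \<in> Sigma_set org trm"
  then obtain x0 where "(z, x0) \<in> trace_space org trm" unfolding Sigma_set_def by force
  then have zt: "z \<in> torus" using P1 by blast
  define F where "F = {x. std_vertex_cond org trm x \<and> edge_cond z x}"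
  have FF: "{x. (z, x) \<in> trace_space org trm} = F"
  proof (rule set_eqI)
    fix x
    show "x \<in> {x. (z, x) \<in> trace_space org trm} \<longleftrightarrow> x \<in> F"
      unfolding F_def mem_Collect_eq by (subst P1) (use zS zt in auto)
  qed
  have lin: "a *s x + b *s y \<in> F" if "x \<in> F" "y \<in> F" for a b x y
    using that unfolding F_def by (auto intro: std_lin edge_lin)
  have subF: "vec.subspace F"
  proof (rule vec.subspaceI)
    show "0 \<in> F" unfolding F_def by (simp add: std_zero edge_zero)
    show "x + y \<in> F" if "x \<in> F" "y \<in> F" for x y
      using lin[OF that, of 1 1] by simp
    show "c *s x \<in> F" if "x \<in> F" for c x
      using lin[OF that that, of c 0] by simp
  qed
  have cF: "cnjv x \<in> F" if "x \<in> F" for x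
    using that zt unfolding F_def by (auto intro: std_cnj edge_cnj)
  show "vec.subspace {x. (z, x) \<in> trace_space org trm}" unfolding FF by (rule subF)
  define R where "R = {x \<in> F. real_vec x}"
  obtain Bs where Bs: "Bs \<subseteq> R" "vec.independent Bs" "R \<subseteq> vec.span Bs"
    by (rule vec.maximal_independent_subset)
  have "vec.span Bs = F"
  proof
    show "vec.span Bs \<subseteq> F" using Bs(1) subF by (intro vec.span_minimal) (auto simp: R_def)
    show "F \<subseteq> vec.span Bs"
    proof
      fix x assume x: "x \<in> F"
      define re where "re = (1/2 :: complex) *s x + (1/2 :: complex) *s cnjv x"
      define im where "im = (- \<i>/2) *s x + (\<i>/2) *s cnjv x"
      have reF: "re \<in> F" unfolding re_def by (rule lin[OF x cF[OF x]])
      have imF: "im \<in> F" unfolding im_def by (rule lin[OF x cF[OF x]])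
      have reR: "real_vec re" unfolding real_vec_def
      proof
        fix i
        have "re $ i = (1/2) * (x $ i + cnj (x $ i))" unfolding re_def cnjv_def by (simp add: algebra_simps)
        also have "\<dots> = of_real (Re (x $ i))" by (simp add: complex_add_cnj)
        finally show "re $ i \<in> \<real>" by simp
      qed
      have imR: "real_vec im" unfolding real_vec_def
      proof
        fix i
        have "im $ i = (- \<i>/2) * (x $ i - cnj (x $ i))" unfolding im_def cnjv_def by (simp add: algebra_simps)
        also have "\<dots> = of_real (Im (x $ i))" by (simp add: complex_diff_cnj algebra_simps)
        finally show "im $ i \<in> \<real>" by simp
      qed
      have xe: "x = re + \<i> *s im"
        unfolding vec_eq_iff re_def im_def cnjv_def by (simp add: algebra_simps)
      have "re \<in> vec.span Bs" "im \<in> vec.span Bs" using Bs(3) reF imF reR imR by (auto simp: R_def)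
      then show "x \<in> vec.span Bs" unfolding xe by (intro vec.span_add vec.span_scale)
    qed
  qed
  then show "\<exists>Bs. (\<forall>b \<in> Bs. real_vec b) \<and> vec.independent Bs \<and>
                  vec.span Bs = {x. (z, x) \<in> trace_space org trm}"
    using Bs unfolding FF by (intro exI[of _ Bs]) (auto simp: R_def)
qed

end
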